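(* Identify $\mathcal M_d(\mathbb C)\otimes\mathcal M_m(\mathbb C)$ with $\mathcal M_{dm}(\mathbb C)$ via $A\otimes B\mapsto(b_{ij}A)_{i,j=1}^m$, and define the partial trace $\mathrm{Tr}_m:\mathcal M_{dm}(\mathbb C)\to\mathcal M_d(\mathbb C)$ by $\mathrm{Tr}_m(C)=\sum_{i=1}^m C_{ii}$, where $C=(C_{ij})_{i,j=1}^m$ with $C_{ij}\in\mathcal M_d(\mathbb C)$. (1) If $S\in\mathcal M_{dm}(\mathbb C)$ is Hermitian, there exists $D_S(d,m)\subseteq\mathbb R^d$ such that $\mathrm{Tr}_m(\mathcal U_{dm}(S))=\{A\in\mathcal M_d(\mathbb C)\text{ Hermitian}:\lambda(A)\in D_S(d,m)\}$. (2) If $S\in\mathcal M_{dm}(\mathbb C)$ is positive semidefinite, there exists $D^w_S(d,m)\subseteq(\mathbb R_{\ge0})^d$ such that $\mathrm{Tr}_m(\mathcal C_{dm}(S))=\{A\in\mathcal M_d(\mathbb C)\text{ positive semidefinite}:\lambda(A)\in D^w_S(d,m)\}$.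
   Context: $\mathcal U_{k}(S)=\{U^*SU:U\in\mathcal M_k(\mathbb C)\text{ unitary}\}$, $\mathcal C_k(S)=\{V^*SV:V\in\mathcal M_k(\mathbb C),\|V\|\le1\}$, and $\mathrm{Tr}_m(\mathcal X)=\{\mathrm{Tr}_m(x):x\in\mathcal X\}$. $\lambda(A)$ is the vector of eigenvalues of Hermitian $A$ in non-increasing order with multiplicity. *)

theory Defs
  imports "Jordan_Normal_Form.Schur_Decomposition" "HOL-Computational_Algebra.Fundamental_Theorem_Algebra"
begin

definition hermitian_mat :: "nat \<Rightarrow> complex mat \<Rightarrow> bool" where
  "hermitian_mat n A \<longleftrightarrow> A \<in> carrier_mat n n \<and> mat_adjoint A = A"

definition psd_mat :: "nat \<Rightarrow> complex mat \<Rightarrow> bool" where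
  "psd_mat n A \<longleftrightarrow> hermitian_mat n A \<and>
     (\<forall>x \<in> carrier_vec n. 0 \<le> Re ((A *\<^sub>v x) \<bullet>c x))"

definition unitary_mat :: "nat \<Rightarrow> complex mat \<Rightarrow> bool" where
  "unitary_mat n U \<longleftrightarrow> U \<in> carrier_mat n n \<and> mat_adjoint U * U = 1\<^sub>m n"

(* operator norm (w.r.t. the Euclidean norm) at most 1: \<parallel>V x\<parallel>^2 \<le> \<parallel>x\<parallel>^2 *)
definition contraction_mat :: "nat \<Rightarrow> complex mat \<Rightarrow> bool" where
  "contraction_mat n V \<longleftrightarrow> V \<in> carrier_mat n n \<and>
     (\<forall>x \<in> carrier_vec n. Re ((V *\<^sub>v x) \<bullet>c (V *\<^sub>v x)) \<le> Re (x \<bullet>c x))"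

definition unitary_orbit :: "nat \<Rightarrow> complex mat \<Rightarrow> complex mat set" where
  "unitary_orbit k S = {mat_adjoint U * S * U | U. unitary_mat k U}"

definition contraction_orbit :: "nat \<Rightarrow> complex mat \<Rightarrow> complex mat set" where
  "contraction_orbit k S = {mat_adjoint V * S * V | V. contraction_mat k V}"

(* Partial trace Tr_m : M_{dm} \<rightarrow> M_d, where C = (C_ij)_{i,j<m} with d x d blocks,
   i.e. block (i,j) occupies rows i*d..i*d+d-1, columns j*d..j*d+d-1 (0-based);
   this is the identification A \<otimes> B \<mapsto> (b_ij A). *)
definition partial_trace :: "nat \<Rightarrow> nat \<Rightarrow> complex mat \<Rightarrow> complex mat" where
  "partial_trace d m C = mat d d (\<lambda>(k, l). \<Sum>i<m. C $$ (i * d + k, i * d + l))"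

(* lambda(A): eigenvalues of a Hermitian matrix (roots of the characteristic
   polynomial with multiplicity, which are real), listed in non-increasing order;
   a vector in R^d is represented as a real list of length d. *)
definition eigvals_desc :: "complex mat \<Rightarrow> real list" where
  "eigvals_desc A = rev (sorted_list_of_multiset (image_mset Re (proots (char_poly A))))"

end

theory Submission
  imports Defs
begin


lemma adj_dims[simp]: "dim_row (mat_adjoint A) = dim_col A" "dim_col (mat_adjoint A) = dim_row A"
  unfolding mat_adjoint_def by simp_all

lemma adj_carrier[simp]: "A \<in> carrier_mat n k \<Longrightarrow> mat_adjoint A \<in> carrier_mat k n"
  unfolding carrier_mat_def by simp

lemma adj_idx[simp]: "i < dim_col A \<Longrightarrow> j < dim_row A \<Longrightarrow>
   mat_adjoint (A::complex mat) $$ (i,j) = cnj (A $$ (j,i))"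
  unfolding mat_adjoint_def by (simp add: mat_of_rows_def)

lemma mult_idx: "i < dim_row A \<Longrightarrow> j < dim_col B \<Longrightarrow> dim_col A = dim_row B \<Longrightarrow>
  (A * B) $$ (i,j) = (\<Sum>k<dim_row B. A$$(i,k) * B$$(k,j))"
  by (simp add: scalar_prod_def atLeast0LessThan)

lemma mv_idx: "i < dim_row A \<Longrightarrow> dim_col A = dim_vec v \<Longrightarrow>
  (A *\<^sub>v v) $ i = (\<Sum>k<dim_vec v. A$$(i,k) * v$k)"
  by (simp add: scalar_prod_def atLeast0LessThan)

lemma csp: "dim_vec x = dim_vec y \<Longrightarrow> x \<bullet>c (y::complex vec) = (\<Sum>i<dim_vec y. x$i * cnj (y$i))"
  by (simp add: scalar_prod_def atLeast0LessThan)

declare index_mult_mat(1)[simp del] index_mult_mat_vec[simp del]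

lemma adj_mult: assumes "A \<in> carrier_mat n k" "B \<in> carrier_mat k l"
  shows "mat_adjoint ((A::complex mat) * B) = mat_adjoint B * mat_adjoint A"
proof (rule eq_matI)
  fix i j assume ij: "i < dim_row (mat_adjoint B * mat_adjoint A)" "j < dim_col (mat_adjoint B * mat_adjoint A)"
  hence i: "i < l" and j: "j < n" using assms by auto
  have "mat_adjoint (A * B) $$ (i,j) = cnj ((A*B) $$ (j,i))" using i j assms by simp
  also have "\<dots> = cnj (\<Sum>r<k. A$$(j,r) * B$$(r,i))" using i j assms by (simp add: mult_idx)
  also have "\<dots> = (\<Sum>r<k. cnj (B$$(r,i)) * cnj (A$$(j,r)))" by (simp add: mult.commute)
  also have "\<dots> = (mat_adjoint B * mat_adjoint A) $$ (i,j)"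
    using i j assms by (simp add: mult_idx)
  finally show "mat_adjoint (A * B) $$ (i,j) = (mat_adjoint B * mat_adjoint A) $$ (i,j)" .
qed (use assms in auto)

lemma adj_adj[simp]: "mat_adjoint (mat_adjoint (A::complex mat)) = A"
  by (rule eq_matI) simp_all

lemma adj_one[simp]: "mat_adjoint (1\<^sub>m n :: complex mat) = 1\<^sub>m n"
  by (rule eq_matI) simp_all

lemma adj_vec: assumes "A \<in> carrier_mat n k" "x \<in> carrier_vec k" "y \<in> carrier_vec n"
  shows "(A *\<^sub>v x) \<bullet>c y = x \<bullet>c (mat_adjoint (A::complex mat) *\<^sub>v y)"
proof -
  have "(A *\<^sub>v x) \<bullet>c y = (\<Sum>i<n. (\<Sum>r<k. A$$(i,r) * x$r) * cnj (y$i))"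
    using assms by (simp add: csp mv_idx)
  also have "\<dots> = (\<Sum>i<n. \<Sum>r<k. A$$(i,r) * x$r * cnj (y$i))" by (simp add: sum_distrib_right)
  also have "\<dots> = (\<Sum>r<k. \<Sum>i<n. A$$(i,r) * x$r * cnj (y$i))" by (rule sum.swap)
  also have "\<dots> = (\<Sum>r<k. x$r * cnj (\<Sum>i<n. cnj (A$$(i,r)) * y$i))"
    by (simp add: sum_distrib_left mult_ac)
  also have "\<dots> = x \<bullet>c (mat_adjoint A *\<^sub>v y)" using assms by (simp add: csp mv_idx)
  finally show ?thesis .
qed

lemma triple_idx: assumes "A \<in> carrier_mat n a" "X \<in> carrier_mat n n'" "B \<in> carrier_mat n' b" "i < a" "j < b"
  shows "(mat_adjoint A * X * B) $$ (i,j) = (\<Sum>c<n'. \<Sum>r<n. cnj (A$$(r,i)) * X$$(r,c) * B$$(c,j))"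
  using assms by (simp add: mult_idx sum_distrib_right)

lemma sum_split_add: "(\<Sum>s<n+(d::nat). f s) = (\<Sum>s<n. f s) + (\<Sum>t<d. f (n+t))"
  by (induction d) (simp_all add: add.assoc)

lemma sum_blocks: "(\<Sum>s<d*(m::nat). f s) = (\<Sum>q<m. \<Sum>t<d. f (q*d+t))"
proof (induction m)
  case (Suc m)
  have "d * Suc m = d*m + d" by simp
  then show ?case using Suc sum_split_add[of f "d*m" d] by (simp add: mult.commute add.commute)
qed simp

lemma blk_lt: "q < m \<Longrightarrow> t < d \<Longrightarrow> q*d+t < d*(m::nat)"
proof -
  assume "q < m" "t < d"
  hence "q*d + t < q*d + d" by simp
  also have "\<dots> = Suc q * d" by simp
  also have "\<dots> \<le> m * d" using \<open>q<m\<close> by (intro mult_le_mono1) simp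
  finally show ?thesis by (simp add: mult.commute)
qed

lemma blk_div[simp]: "t < d \<Longrightarrow> (q*d+t) div d = (q::nat)"
  by simp
lemma blk_mod[simp]: "t < d \<Longrightarrow> (q*d+t) mod d = (t::nat)"
  by simp

definition bdiag :: "nat \<Rightarrow> nat \<Rightarrow> complex mat \<Rightarrow> complex mat" where
  "bdiag d m W = mat (d*m) (d*m) (\<lambda>(r,c). if r div d = c div d then W $$ (r mod d, c mod d) else 0)"

lemma bdiag_carrier[simp]: "bdiag d m W \<in> carrier_mat (d*m) (d*m)"
  unfolding bdiag_def by simp

lemma bdiag_dims[simp]: "dim_row (bdiag d m W) = d*m" "dim_col (bdiag d m W) = d*m"
  unfolding bdiag_def by simp_all

lemma bdiag_idx[simp]: "q < m \<Longrightarrow> t < d \<Longrightarrow> q' < m \<Longrightarrow> t' < d \<Longrightarrow>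
  bdiag d m W $$ (q*d+t, q'*d+t') = (if q = q' then W$$(t,t') else 0)"
  unfolding bdiag_def using blk_lt[of q m t d] blk_lt[of q' m t' d] by simp

lemma ifz_mult[simp]: "(if P then a else 0) * b = (if P then a * b else (0::'a::semiring_0))" by simp
lemma mult_ifz[simp]: "b * (if P then a else 0) = (if P then b * a else (0::'a::semiring_0))" by simp
lemma cnj_ifz[simp]: "cnj (if P then a else 0) = (if P then cnj a else 0)" by simp
lemma sum_ifz[simp]: "(\<Sum>x\<in>A. if P then f x else 0) = (if P then (\<Sum>x\<in>A. f x) else (0::'a::comm_monoid_add))" by simp

lemma ptrace_idx[simp]: "k < d \<Longrightarrow> l < d \<Longrightarrow> partial_trace d m C $$ (k,l) = (\<Sum>i<m. C $$ (i*d+k, i*d+l))"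
  unfolding partial_trace_def by simp

lemma ptrace_carrier[simp]: "partial_trace d m C \<in> carrier_mat d d"
  unfolding partial_trace_def by simp
lemma ptrace_dims[simp]: "dim_row (partial_trace d m C) = d" "dim_col (partial_trace d m C) = d"
  unfolding partial_trace_def by simp_all

lemma ptrace_conj: assumes W: "W \<in> carrier_mat d d" and X: "X \<in> carrier_mat (d*m) (d*m)"
  shows "partial_trace d m (mat_adjoint (bdiag d m W) * X * bdiag d m W) =
         mat_adjoint W * partial_trace d m X * W"
proof (rule eq_matI)
  fix k l assume "k < dim_row (mat_adjoint W * partial_trace d m X * W)" "l < dim_col (mat_adjoint W * partial_trace d m X * W)"
  hence k: "k < d" and l: "l < d" using W by auto
  let ?K = "bdiag d m W"
  have "partial_trace d m (mat_adjoint ?K * X * ?K) $$ (k,l) =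
    (\<Sum>i<m. \<Sum>c<d*m. \<Sum>r<d*m. cnj (?K$$(r,i*d+k)) * X$$(r,c) * ?K$$(c,i*d+l))"
    using k l X blk_lt by (simp add: triple_idx[OF bdiag_carrier X bdiag_carrier])
  also have "\<dots> = (\<Sum>i<m. \<Sum>q'<m. \<Sum>t'<d. \<Sum>q<m. \<Sum>t<d. cnj (?K$$(q*d+t,i*d+k)) * X$$(q*d+t,q'*d+t') * ?K$$(q'*d+t',i*d+l))"
    by (simp add: sum_blocks)
  also have "\<dots> = (\<Sum>i<m. \<Sum>t'<d. \<Sum>t<d. cnj (W$$(t,k)) * X$$(i*d+t,i*d+t') * W$$(t',l))"
    using k l by simp
  also have "\<dots> = (\<Sum>t'<d. \<Sum>t<d. cnj (W$$(t,k)) * (\<Sum>i<m. X$$(i*d+t,i*d+t')) * W$$(t',l))"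
    by (simp add: sum_distrib_left sum_distrib_right sum.swap[of _ "{..<m}"])
  also have "\<dots> = (mat_adjoint W * partial_trace d m X * W) $$ (k,l)"
    using k l W by (simp add: triple_idx[OF W ptrace_carrier W])
  finally show "partial_trace d m (mat_adjoint ?K * X * ?K) $$ (k,l) = (mat_adjoint W * partial_trace d m X * W) $$ (k,l)" .
qed (use W in auto)

lemma blk_eq: "t < d \<Longrightarrow> t' < d \<Longrightarrow> (q*d+t = q'*d+t') = (q = q' \<and> (t::nat) = t')"
  by (metis blk_div blk_mod)

lemma blk_decomp: "r < d*(m::nat) \<Longrightarrow> r = (r div d)*d + r mod d \<and> r div d < m \<and> r mod d < d"
proof -
  assume r: "r < d*m"
  hence d: "d > 0" by (cases d) auto
  have "r div d < m" using r d by (simp add: div_less_iff_less_mult mult.commute)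
  thus ?thesis using d by simp
qed

lemma mat_eq_blocks: assumes "A \<in> carrier_mat (d*m) (d*m)" "B \<in> carrier_mat (d*m) (d*m)"
  and "\<And>q t q' t'. q < m \<Longrightarrow> t < d \<Longrightarrow> q' < m \<Longrightarrow> t' < d \<Longrightarrow> A $$ (q*d+t, q'*d+t') = B $$ (q*d+t, q'*d+t')"
  shows "A = B"
proof (rule eq_matI)
  fix i j assume "i < dim_row B" "j < dim_col B"
  hence "i < d*m" "j < d*m" using assms by auto
  with blk_decomp[of i d m] blk_decomp[of j d m] assms(3)[of "i div d" "i mod d" "j div d" "j mod d"]
  show "A $$ (i,j) = B $$ (i,j)" by metis
qed (use assms in auto)

lemma unitary_right: "unitary_mat n U \<Longrightarrow> U * mat_adjoint U = 1\<^sub>m n"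
  unfolding unitary_mat_def by (metis adj_carrier mat_mult_left_right_inverse)

lemma unitary_adj: "unitary_mat n U \<Longrightarrow> unitary_mat n (mat_adjoint U)"
  using unitary_right unfolding unitary_mat_def by auto

lemma unitary_mult: assumes "unitary_mat n U" "unitary_mat n V" shows "unitary_mat n (U * V)"
proof -
  have U: "U \<in> carrier_mat n n" and V: "V \<in> carrier_mat n n" using assms unfolding unitary_mat_def by auto
  have "mat_adjoint (U * V) * (U * V) = mat_adjoint V * (mat_adjoint U * U) * V"
    using U V by (simp add: adj_mult[OF U V] assoc_mult_mat[of _ n n _ n _ n] mult_carrier_mat[of _ n n])
  also have "\<dots> = 1\<^sub>m n" using assms U V unfolding unitary_mat_def by simp
  finally show ?thesis using U V unfolding unitary_mat_def by simp
qed

lemma unitary_bdiag: assumes "unitary_mat d W" shows "unitary_mat (d*m) (bdiag d m W)"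
proof -
  have W: "W \<in> carrier_mat d d" and WW: "mat_adjoint W * W = 1\<^sub>m d" using assms unfolding unitary_mat_def by auto
  have "mat_adjoint (bdiag d m W) * bdiag d m W = 1\<^sub>m (d*m)"
  proof (rule mat_eq_blocks)
    fix q t q' t' assume *: "q < m" "t < d" "q' < m" "t' < d"
    have "(mat_adjoint (bdiag d m W) * bdiag d m W) $$ (q*d+t, q'*d+t') =
      (\<Sum>p<m. \<Sum>u<d. cnj (bdiag d m W $$ (p*d+u, q*d+t)) * bdiag d m W $$ (p*d+u, q'*d+t'))"
      using * blk_lt by (simp add: mult_idx sum_blocks)
    also have "\<dots> = (if q = q' then (mat_adjoint W * W) $$ (t,t') else 0)"
      using * W by (simp add: mult_idx)
    also have "\<dots> = 1\<^sub>m (d*m) $$ (q*d+t, q'*d+t')"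
      using * blk_lt blk_eq[of t d t' q q'] WW by simp
    finally show "(mat_adjoint (bdiag d m W) * bdiag d m W) $$ (q*d+t, q'*d+t') = 1\<^sub>m (d*m) $$ (q*d+t, q'*d+t')" .
  qed auto
  thus ?thesis unfolding unitary_mat_def by simp
qed

lemma conj_mult: fixes S U K :: "complex mat" assumes "S \<in> carrier_mat n n" "U \<in> carrier_mat n n" "K \<in> carrier_mat n n"
  shows "mat_adjoint (U * K) * S * (U * K) = mat_adjoint K * (mat_adjoint U * S * U) * K"
  using assms by (simp add: adj_mult[OF assms(2,3)] assoc_mult_mat[of _ n n _ n _ n] mult_carrier_mat[of _ n n])


lemma triple_carrier: "V \<in> carrier_mat n k \<Longrightarrow> S \<in> carrier_mat n n \<Longrightarrow> mat_adjoint V * S * V \<in> carrier_mat k k"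
  by (metis adj_carrier mult_carrier_mat)

lemma herm_conj: fixes S V :: "complex mat" assumes "hermitian_mat n S" "V \<in> carrier_mat n k"
  shows "hermitian_mat k (mat_adjoint V * S * V)"
proof -
  have S: "S \<in> carrier_mat n n" and SS: "mat_adjoint S = S" using assms unfolding hermitian_mat_def by auto
  have VS: "mat_adjoint V * S \<in> carrier_mat k n" using S assms(2) by (intro mult_carrier_mat) auto
  have "mat_adjoint (mat_adjoint V * S * V) = mat_adjoint V * mat_adjoint (mat_adjoint V * S)"
    using adj_mult[OF VS assms(2)] by simp
  also have "\<dots> = mat_adjoint V * (S * V)"
    using adj_mult[OF adj_carrier[OF assms(2)] S] SS by simp
  also have "\<dots> = mat_adjoint V * S * V"
    using S assms(2) by (simp add: assoc_mult_mat[of _ k n _ n _ k])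
  finally show ?thesis using triple_carrier[OF assms(2) S] unfolding hermitian_mat_def by simp
qed

lemma herm_idx: "hermitian_mat n A \<Longrightarrow> i < n \<Longrightarrow> j < n \<Longrightarrow> A $$ (i,j) = cnj (A $$ (j,i))"
  unfolding hermitian_mat_def by (metis adj_idx carrier_matD)


lemma hermI: "A \<in> carrier_mat n n \<Longrightarrow> (\<And>i j. i < n \<Longrightarrow> j < n \<Longrightarrow> A $$ (i,j) = cnj (A $$ (j,i))) \<Longrightarrow> hermitian_mat n A"
  unfolding hermitian_mat_def
proof (intro conjI)
  assume A: "A \<in> carrier_mat n n" and h: "\<And>i j. i < n \<Longrightarrow> j < n \<Longrightarrow> A $$ (i,j) = cnj (A $$ (j,i))"
  show "mat_adjoint A = A"
  proof (rule eq_matI)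
    fix i j assume "i < dim_row A" "j < dim_col A"
    thus "mat_adjoint A $$ (i,j) = A $$ (i,j)" using A h[of i j] by simp
  qed (use A in simp_all)
qed

lemma ptrace_herm: assumes "hermitian_mat (d*m) X" shows "hermitian_mat d (partial_trace d m X)"
proof (rule hermI)
  fix k l
  assume kl: "k < d" "l < d"
  have "\<And>i. i < m \<Longrightarrow> X $$ (i*d+k, i*d+l) = cnj (X $$ (i*d+l, i*d+k))"
    using herm_idx[OF assms] blk_lt kl by blast
  thus "partial_trace d m X $$ (k,l) = cnj (partial_trace d m X $$ (l,k))"
    using kl by simp
qed simp

lemma quad: "A \<in> carrier_mat n n \<Longrightarrow> x \<in> carrier_vec n \<Longrightarrow>
  (A *\<^sub>v x) \<bullet>c x = (\<Sum>k<n. \<Sum>l<n. A$$(k,l) * x$l * cnj (x$k))"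
  by (simp add: csp mv_idx sum_distrib_right)

definition bvec :: "nat \<Rightarrow> nat \<Rightarrow> nat \<Rightarrow> complex vec \<Rightarrow> complex vec" where
  "bvec d m i x = vec (d*m) (\<lambda>r. if r div d = i then x $ (r mod d) else 0)"

lemma bvec_carrier[simp]: "bvec d m i x \<in> carrier_vec (d*m)" unfolding bvec_def by simp

lemma bvec_idx[simp]: "q < m \<Longrightarrow> t < d \<Longrightarrow> bvec d m i x $ (q*d+t) = (if q = i then x $ t else 0)"
  unfolding bvec_def using blk_lt[of q m t d] by simp


lemma psd_conj: fixes S V :: "complex mat" assumes "psd_mat n S" "V \<in> carrier_mat n k"
  shows "psd_mat k (mat_adjoint V * S * V)"
proof -
  have S: "S \<in> carrier_mat n n" using assms unfolding psd_mat_def hermitian_mat_def by auto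
  have V: "V \<in> carrier_mat n k" by fact
  { fix x :: "complex vec" assume x: "x \<in> carrier_vec k"
    have "(mat_adjoint V * S * V) *\<^sub>v x = mat_adjoint V *\<^sub>v (S *\<^sub>v (V *\<^sub>v x))"
    proof -
      have VS: "mat_adjoint V * S \<in> carrier_mat k n" using S V by (metis adj_carrier mult_carrier_mat)
      have "(mat_adjoint V * S * V) *\<^sub>v x = (mat_adjoint V * S) *\<^sub>v (V *\<^sub>v x)"
        by (rule assoc_mult_mat_vec[OF VS V x])
      also have "\<dots> = mat_adjoint V *\<^sub>v (S *\<^sub>v (V *\<^sub>v x))"
        by (rule assoc_mult_mat_vec[OF adj_carrier[OF V] S]) (use V x in simp)
      finally show ?thesis .
    qed
    hence "((mat_adjoint V * S * V) *\<^sub>v x) \<bullet>c x = (S *\<^sub>v (V *\<^sub>v x)) \<bullet>c (V *\<^sub>v x)"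
      using S V x by (simp add: adj_vec[of "mat_adjoint V" k n])
    moreover have "0 \<le> Re ((S *\<^sub>v (V *\<^sub>v x)) \<bullet>c (V *\<^sub>v x))"
      using assms(1) V x unfolding psd_mat_def by simp
    ultimately have "0 \<le> Re (((mat_adjoint V * S * V) *\<^sub>v x) \<bullet>c x)" by simp }
  thus ?thesis using herm_conj[OF _ V] assms(1) unfolding psd_mat_def by blast
qed


lemma ptrace_psd: assumes "psd_mat (d*m) X" shows "psd_mat d (partial_trace d m X)"
proof -
  have X: "X \<in> carrier_mat (d*m) (d*m)" using assms unfolding psd_mat_def hermitian_mat_def by auto
  { fix x :: "complex vec" assume x: "x \<in> carrier_vec d"
    have "(partial_trace d m X *\<^sub>v x) \<bullet>c x = (\<Sum>k<d. \<Sum>l<d. \<Sum>i<m. X$$(i*d+k,i*d+l) * x$l * cnj (x$k))"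
      using x by (simp add: quad[OF ptrace_carrier x] sum_distrib_right)
    also have "\<dots> = (\<Sum>i<m. \<Sum>k<d. \<Sum>l<d. X$$(i*d+k,i*d+l) * x$l * cnj (x$k))"
      by (simp add: sum.swap[of _ "{..<m}"])
    also have "\<dots> = (\<Sum>i<m. (X *\<^sub>v bvec d m i x) \<bullet>c bvec d m i x)"
    proof (rule sum.cong[OF refl])
      fix i assume i: "i \<in> {..<m}"
      have "(X *\<^sub>v bvec d m i x) \<bullet>c bvec d m i x =
        (\<Sum>q<m. \<Sum>t<d. \<Sum>q'<m. \<Sum>t'<d. X$$(q*d+t,q'*d+t') * bvec d m i x $ (q'*d+t') * cnj (bvec d m i x $ (q*d+t)))"
        by (simp add: quad[OF X bvec_carrier] sum_blocks)
      also have "\<dots> = (\<Sum>k<d. \<Sum>l<d. X$$(i*d+k,i*d+l) * x$l * cnj (x$k))"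
        using i by simp
      finally show "(\<Sum>k<d. \<Sum>l<d. X$$(i*d+k,i*d+l) * x$l * cnj (x$k)) = (X *\<^sub>v bvec d m i x) \<bullet>c bvec d m i x" by simp
    qed
    finally have "0 \<le> Re ((partial_trace d m X *\<^sub>v x) \<bullet>c x)"
      using assms unfolding psd_mat_def by (simp add: Re_sum sum_nonneg)
  }
  thus ?thesis using ptrace_herm assms unfolding psd_mat_def by blast
qed




lemma csp_smult: "dim_vec x = dim_vec y \<Longrightarrow> (a \<cdot>\<^sub>v x) \<bullet>c (b \<cdot>\<^sub>v (y::complex vec)) = a * cnj b * (x \<bullet>c y)"
  by (simp add: csp sum_distrib_left mult_ac)

lemma csp_self_real: assumes "w \<in> carrier_vec n" "w \<noteq> 0\<^sub>v n"
  shows "w \<bullet>c w = complex_of_real (Re (w \<bullet>c w)) \<and> Re (w \<bullet>c (w::complex vec)) > 0"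
proof -
  have "w \<bullet>c w > 0" using assms conjugate_square_greater_0_vec by blast
  thus ?thesis by (simp add: less_complex_def complex_eq_iff)
qed

definition nrm :: "complex vec \<Rightarrow> complex vec" where
  "nrm w = (1 / complex_of_real (sqrt (Re (w \<bullet>c w)))) \<cdot>\<^sub>v w"

lemma nrm_carrier[simp]: "w \<in> carrier_vec n \<Longrightarrow> nrm w \<in> carrier_vec n"
  unfolding nrm_def by simp

lemma nrm_self: assumes "w \<in> carrier_vec n" "w \<noteq> 0\<^sub>v n" shows "nrm w \<bullet>c nrm w = 1"
proof -
  obtain r where r: "w \<bullet>c w = complex_of_real r" "r > 0" using csp_self_real[OF assms] by blast
  have "nrm w \<bullet>c nrm w = (1 / complex_of_real (sqrt r)) * cnj (1 / complex_of_real (sqrt r)) * complex_of_real r"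
    unfolding nrm_def by (subst csp_smult) (simp_all add: r)
  also have "\<dots> = complex_of_real ((1 / sqrt r) * (1 / sqrt r) * r)" using r(2) by (simp add: complex_eq_iff)
  also have "(1 / sqrt r) * (1 / sqrt r) * r = 1" using r(2)
    by (simp add: field_simps)
  finally show ?thesis by simp
qed

lemma nrm_orth: "dim_vec v = dim_vec w \<Longrightarrow> v \<bullet>c w = 0 \<Longrightarrow> nrm v \<bullet>c nrm w = 0"
  unfolding nrm_def by (subst csp_smult) simp_all

lemma onb_exists: assumes v: "v \<in> carrier_vec n" and v0: "v \<noteq> 0\<^sub>v n"
  shows "\<exists>U c. unitary_mat n U \<and> col U 0 = c \<cdot>\<^sub>v v \<and> 0 < n"
proof -
  interpret cof_vec_space n "TYPE(complex)" .
  define b where "b = basis_completion v"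
  define ws where "ws = gram_schmidt n b"
  from basis_completion[OF v v0, folded b_def]
  have dist_b: "distinct b" and indep: "\<not> lin_dep (set b)" and b: "set b \<subseteq> carrier_vec n" and hdb: "hd b = v"
    and len_b: "length b = n" by auto
  have n: "0 < n" using v v0 by (cases n) auto
  from hdb len_b n obtain vs where bv: "b = v # vs" by (cases b, auto)
  from gram_schmidt_result[OF b dist_b indep ws_def]
  have ws: "set ws \<subseteq> carrier_vec n" "corthogonal ws" "length ws = n" by (auto simp: len_b)
  have hdws: "hd ws = v" using gram_schmidt_hd[OF v, of vs] unfolding ws_def bv .
  define us where "us = map nrm ws"
  have lus: "length us = n" using ws unfolding us_def by simp
  have usc: "\<And>i. i < n \<Longrightarrow> us ! i \<in> carrier_vec n" using ws unfolding us_def by (auto intro!: nrm_carrier)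
  have wsc: "\<And>i. i < n \<Longrightarrow> ws ! i \<in> carrier_vec n" using ws by auto
  have orth: "\<And>i j. i < n \<Longrightarrow> j < n \<Longrightarrow> us ! i \<bullet>c us ! j = (if i = j then 1 else 0)"
  proof -
    fix i j assume ij: "i < n" "j < n"
    show "us ! i \<bullet>c us ! j = (if i = j then 1 else 0)"
    proof (cases "i = j")
      case True
      have "ws ! i \<bullet>c ws ! i \<noteq> 0" using corthogonalD[OF ws(2)] ij ws(3) by auto
      hence "ws ! i \<noteq> 0\<^sub>v n" using wsc[OF ij(1)] by auto
      thus ?thesis using True nrm_self[OF wsc[OF ij(1)]] ij ws(3) unfolding us_def by simp
    next
      case False
      have "ws ! i \<bullet>c ws ! j = 0" using corthogonalD[OF ws(2)] ij ws(3) False by auto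
      moreover have "dim_vec (ws ! i) = dim_vec (ws ! j)" using wsc[OF ij(1)] wsc[OF ij(2)] by simp
      ultimately show ?thesis using False nrm_orth[of "ws!i" "ws!j"] ij ws(3) unfolding us_def by auto
    qed
  qed
  define U where "U = mat_of_cols n us"
  have U: "U \<in> carrier_mat n n" unfolding U_def using lus mat_of_cols_carrier(1)[of n us] by simp
  have "mat_adjoint U * U = 1\<^sub>m n"
  proof (rule eq_matI)
    fix i j assume "i < dim_row (1\<^sub>m n :: complex mat)" "j < dim_col (1\<^sub>m n :: complex mat)"
    hence ij: "i < n" "j < n" by auto
    have "(mat_adjoint U * U) $$ (i,j) = (\<Sum>k<n. cnj (us ! i $ k) * us ! j $ k)"
      using U ij lus by (simp add: mult_idx U_def mat_of_cols_index)
    also have "\<dots> = us ! j \<bullet>c us ! i" using usc[OF ij(1)] usc[OF ij(2)] by (simp add: csp mult.commute)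
    also have "\<dots> = 1\<^sub>m n $$ (i,j)" using orth ij by simp
    finally show "(mat_adjoint U * U) $$ (i,j) = 1\<^sub>m n $$ (i,j)" .
  qed (use U in auto)
  hence uni: "unitary_mat n U" unfolding unitary_mat_def using U by simp
  have "col U 0 = us ! 0" unfolding U_def using n usc lus by (simp add: col_mat_of_cols)
  also have "us ! 0 = nrm v" unfolding us_def using hdws ws(3) n hd_conv_nth[of ws] by fastforce
  finally have "col U 0 = (1 / complex_of_real (sqrt (Re (v \<bullet>c v)))) \<cdot>\<^sub>v v" unfolding nrm_def .
  thus ?thesis using uni n by blast
qed




lemma conj_entry: fixes U A :: "complex mat" assumes U: "U \<in> carrier_mat n n" and A: "A \<in> carrier_mat n n" and ij: "i < n" "j < n"
  shows "(mat_adjoint U * A * U) $$ (i,j) = (A *\<^sub>v col U j) \<bullet>c col U i"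
proof -
  have "(mat_adjoint U * A * U) $$ (i,j) = (\<Sum>c<n. \<Sum>r<n. cnj (U$$(r,i)) * A$$(r,c) * U$$(c,j))"
    by (rule triple_idx[OF U A U ij])
  also have "\<dots> = (\<Sum>r<n. \<Sum>c<n. cnj (U$$(r,i)) * A$$(r,c) * U$$(c,j))" by (rule sum.swap)
  also have "\<dots> = (A *\<^sub>v col U j) \<bullet>c col U i"
    using U A ij by (simp add: csp mv_idx sum_distrib_right sum_distrib_left mult_ac)
  finally show ?thesis .
qed

lemma unitary_cols: fixes U :: "complex mat" assumes "unitary_mat n U" "i < n" "j < n"
  shows "col U j \<bullet>c col U i = (if i = j then 1 else 0)"
proof -
  have U: "U \<in> carrier_mat n n" using assms unfolding unitary_mat_def by auto
  have "col U j \<bullet>c col U i = (1\<^sub>m n *\<^sub>v col U j) \<bullet>c col U i" using U assms by simp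
  also have "\<dots> = (mat_adjoint U * 1\<^sub>m n * U) $$ (i,j)"
    using conj_entry[OF U one_carrier_mat assms(2,3)] by simp
  also have "mat_adjoint U * 1\<^sub>m n * U = 1\<^sub>m n" using assms U unfolding unitary_mat_def by simp
  finally show ?thesis using assms by simp
qed

definition diagm :: "nat \<Rightarrow> complex list \<Rightarrow> complex mat" where
  "diagm n es = mat n n (\<lambda>(i,j). if i = j then es ! i else 0)"

lemma diagm_carrier[simp]: "diagm n es \<in> carrier_mat n n" unfolding diagm_def by simp
lemma diagm_dims[simp]: "dim_row (diagm n es) = n" "dim_col (diagm n es) = n" unfolding diagm_def by simp_all

lemma char_poly_1x1: "char_poly (mat 1 1 (\<lambda>_. e)) = [:- e, 1:]"
  by (simp add: char_poly_defs det_def sign_def)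

lemma degree_lin: "degree (\<Prod>a\<leftarrow>as. [:- a, 1::complex:]) = length as"
proof (induction as)
  case (Cons b as)
  have "(\<Prod>a\<leftarrow>b # as. [:- a, 1:]) = [:- b,1 :] * (\<Prod>a\<leftarrow>as. [:- a, 1:])" by simp
  moreover have "(\<Prod>a\<leftarrow>as. [:- a, 1::complex:]) \<noteq> 0" by (auto simp: prod_list_zero_iff)
  hence "degree ([:- b,1 :] * (\<Prod>a\<leftarrow>as. [:- a, 1:])) = degree [:- b,1 :] + degree (\<Prod>a\<leftarrow>as. [:- a, 1::complex:])"
    by (intro degree_mult_eq) auto
  ultimately show ?case using Cons by simp
qed simp

lemma spectral: "hermitian_mat n A \<Longrightarrow> char_poly A = (\<Prod>a\<leftarrow>es. [:- a, 1:]) \<Longrightarrow>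
  \<exists>U. unitary_mat n U \<and> mat_adjoint U * A * U = diagm n es"
proof (induction es arbitrary: n A)
  case Nil
  hence A: "A \<in> carrier_mat n n" unfolding hermitian_mat_def by auto
  from degree_monic_char_poly[OF A] Nil have n: "n = 0" by simp
  have "unitary_mat n (1\<^sub>m n)" unfolding unitary_mat_def by simp
  moreover have "mat_adjoint (1\<^sub>m n) * A * 1\<^sub>m n = diagm n []"
    by (rule eq_matI) (use A n in \<open>simp_all add: diagm_def\<close>)
  ultimately show ?case by blast
next
  case (Cons e es n A)
  have A: "A \<in> carrier_mat n n" using Cons.prems unfolding hermitian_mat_def by auto
  from degree_monic_char_poly[OF A] Cons.prems(2) degree_lin[of "e#es"]
  have "n = Suc (length es)" by simp
  then obtain n1 where n: "n = Suc n1" by blast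
  have "poly (char_poly A) e = 0" using Cons.prems(2) by simp
  hence "eigenvalue A e" using eigenvalue_root_char_poly[OF A] by simp
  then obtain v where v: "v \<in> carrier_vec n" "v \<noteq> 0\<^sub>v n" "A *\<^sub>v v = e \<cdot>\<^sub>v v"
    unfolding eigenvalue_def eigenvector_def using A by auto
  obtain U1 c where U1u: "unitary_mat n U1" and c0: "col U1 0 = c \<cdot>\<^sub>v v"
    using onb_exists[OF v(1,2)] by blast
  have U1: "U1 \<in> carrier_mat n n" using U1u unfolding unitary_mat_def by auto
  define A' where "A' = mat_adjoint U1 * A * U1"
  have hA': "hermitian_mat n A'" unfolding A'_def using herm_conj[OF Cons.prems(1) U1] .
  have A'c: "A' \<in> carrier_mat n n" using hA' unfolding hermitian_mat_def by auto
  have Acol: "A *\<^sub>v col U1 0 = e \<cdot>\<^sub>v col U1 0"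
    unfolding c0 using A v by (simp add: mult_mat_vec[OF A v(1)] smult_smult_assoc mult.commute)
  have A'col: "\<And>i. i < n \<Longrightarrow> A' $$ (i,0) = (if i = 0 then e else 0)"
  proof -
    fix i assume i: "i < n"
    have "A' $$ (i,0) = (e \<cdot>\<^sub>v col U1 0) \<bullet>c col U1 i"
      unfolding A'_def using conj_entry[OF U1 A i] n Acol by simp
    also have "\<dots> = e * (col U1 0 \<bullet>c col U1 i)" using U1 i n by simp
    also have "\<dots> = (if i = 0 then e else 0)" using unitary_cols[OF U1u i] n by simp
    finally show "A' $$ (i,0) = (if i = 0 then e else 0)" .
  qed
  have A'row: "\<And>j. j < n \<Longrightarrow> A' $$ (0,j) = (if j = 0 then e else 0)"
  proof -
    fix j assume j: "j < n"
    have "A' $$ (0,j) = cnj (A' $$ (j,0))" using herm_idx[OF hA' _ j] n by simp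
    also have "\<dots> = (if j = 0 then cnj e else 0)" using A'col[OF j] by simp
    also have "cnj e = e" using herm_idx[OF hA', of 0 0] A'col[of 0] n by simp
    finally show "A' $$ (0,j) = (if j = 0 then e else 0)" .
  qed
  define A3 where "A3 = mat n1 n1 (\<lambda>(i,j). A' $$ (Suc i, Suc j))"
  have hA3: "hermitian_mat n1 A3"
  proof (rule hermI)
    show "A3 \<in> carrier_mat n1 n1" unfolding A3_def by simp
    fix i j assume "i < n1" "j < n1"
    thus "A3 $$ (i,j) = cnj (A3 $$ (j,i))" unfolding A3_def using herm_idx[OF hA', of "Suc i" "Suc j"] n by simp
  qed
  have blk: "A' = four_block_mat (mat 1 1 (\<lambda>_. e)) (0\<^sub>m 1 n1) (0\<^sub>m n1 1) A3"
  proof (rule eq_matI)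
    fix i j assume "i < dim_row (four_block_mat (mat 1 1 (\<lambda>_. e)) (0\<^sub>m 1 n1) (0\<^sub>m n1 1) A3)"
      "j < dim_col (four_block_mat (mat 1 1 (\<lambda>_. e)) (0\<^sub>m 1 n1) (0\<^sub>m n1 1) A3)"
    hence ij: "i < n" "j < n" unfolding A3_def using n by auto
    show "A' $$ (i,j) = four_block_mat (mat 1 1 (\<lambda>_. e)) (0\<^sub>m 1 n1) (0\<^sub>m n1 1) A3 $$ (i,j)"
    proof (cases i)
      case 0
      thus ?thesis using A'row[OF ij(2)] ij n unfolding A3_def by simp
    next
      case (Suc i')
      show ?thesis
      proof (cases j)
        case 0
        thus ?thesis using A'col[OF ij(1)] ij n Suc unfolding A3_def by simp
      next
        case (Suc j')
        thus ?thesis using ij n \<open>i = Suc i'\<close> unfolding A3_def by simp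
      qed
    qed
  qed (use A'c n in \<open>simp_all add: A3_def\<close>)
  have "similar_mat_wit A' A (mat_adjoint U1) U1"
    unfolding similar_mat_wit_def Let_def using A'c A U1 U1u unitary_right[OF U1u]
    unfolding unitary_mat_def A'_def by auto
  hence "char_poly A' = char_poly A" using char_poly_similar unfolding similar_mat_def by blast
  moreover have "char_poly A' = [:- e, 1:] * char_poly A3"
    unfolding blk char_poly_1x1[symmetric]
    by (rule char_poly_four_block_zeros_col) (simp_all add: A3_def)
  ultimately have "[:- e, 1:] * char_poly A3 = [:- e, 1:] * (\<Prod>a\<leftarrow>es. [:- a, 1:])"
    using Cons.prems(2) by simp
  hence cp3: "char_poly A3 = (\<Prod>a\<leftarrow>es. [:- a, 1:])"
    by (metis mult_cancel_left pCons_eq_0_iff zero_neq_one)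
  obtain U3 where U3u: "unitary_mat n1 U3" and U3d: "mat_adjoint U3 * A3 * U3 = diagm n1 es"
    using Cons.IH[OF hA3 cp3] by blast
  have U3: "U3 \<in> carrier_mat n1 n1" using U3u unfolding unitary_mat_def by auto
  define U2 where "U2 = mat n n (\<lambda>(i,j). if i = 0 \<and> j = 0 then 1 else if i = 0 \<or> j = 0 then 0 else U3 $$ (i - 1, j - 1))"
  have U2c: "U2 \<in> carrier_mat n n" unfolding U2_def by simp
  have U2_00: "U2 $$ (0,0) = 1" and U2_0S: "\<And>j. j < n1 \<Longrightarrow> U2 $$ (0, Suc j) = 0"
    and U2_S0: "\<And>j. j < n1 \<Longrightarrow> U2 $$ (Suc j, 0) = 0"
    and U2_SS: "\<And>i j. i < n1 \<Longrightarrow> j < n1 \<Longrightarrow> U2 $$ (Suc i, Suc j) = U3 $$ (i,j)"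
    unfolding U2_def n by simp_all
  have A'_00: "A' $$ (0,0) = e" and A'_0S: "\<And>j. j < n1 \<Longrightarrow> A' $$ (0, Suc j) = 0"
    and A'_S0: "\<And>j. j < n1 \<Longrightarrow> A' $$ (Suc j, 0) = 0"
    and A'_SS: "\<And>i j. i < n1 \<Longrightarrow> j < n1 \<Longrightarrow> A' $$ (Suc i, Suc j) = A3 $$ (i,j)"
    using A'col A'row n unfolding A3_def by simp_all
  note ents = U2_00 U2_0S U2_S0 U2_SS A'_00 A'_0S A'_S0 A'_SS
  have idx: "\<And>i. i < n \<Longrightarrow> i = 0 \<or> (\<exists>i'. i = Suc i' \<and> i' < n1)" using n by (case_tac i) auto
  have "mat_adjoint U2 * U2 = 1\<^sub>m n"
  proof (rule eq_matI)
    fix i j assume "i < dim_row (1\<^sub>m n :: complex mat)" "j < dim_col (1\<^sub>m n :: complex mat)"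
    hence ij: "i < n" "j < n" by auto
    have e1: "(mat_adjoint U2 * U2) $$ (i,j) = (\<Sum>r<Suc n1. cnj (U2 $$ (r,i)) * U2 $$ (r,j))"
      using U2c ij n by (simp add: mult_idx)
    show "(mat_adjoint U2 * U2) $$ (i,j) = 1\<^sub>m n $$ (i,j)"
    proof -
      from idx[OF ij(1)] idx[OF ij(2)] show ?thesis
      proof (elim disjE exE conjE)
        assume "i = 0" "j = 0" thus ?thesis using e1[unfolded sum.lessThan_Suc_shift] ents ij by (simp del: sum.lessThan_Suc lessThan_Suc)
      next
        fix j' assume "i = 0" "j = Suc j'" "j' < n1" thus ?thesis using e1[unfolded sum.lessThan_Suc_shift] ents ij by (simp del: sum.lessThan_Suc lessThan_Suc)
      next
        fix i' assume "i = Suc i'" "i' < n1" "j = 0" thus ?thesis using e1[unfolded sum.lessThan_Suc_shift] ents ij by (simp del: sum.lessThan_Suc lessThan_Suc)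
      next
        fix i' j' assume *: "i = Suc i'" "i' < n1" "j = Suc j'" "j' < n1"
        have "(mat_adjoint U2 * U2) $$ (i,j) = (\<Sum>r<n1. cnj (U3 $$ (r,i')) * U3 $$ (r,j'))"
          using e1[unfolded sum.lessThan_Suc_shift] ents * by (simp del: sum.lessThan_Suc lessThan_Suc)
        also have "\<dots> = (mat_adjoint U3 * U3) $$ (i',j')" using U3 * by (simp add: mult_idx)
        also have "\<dots> = 1\<^sub>m n $$ (i,j)" using U3u * ij unfolding unitary_mat_def by simp
        finally show ?thesis .
      qed
    qed
  qed (use U2c in auto)
  hence U2u: "unitary_mat n U2" unfolding unitary_mat_def using U2c by simp
  have "mat_adjoint U2 * A' * U2 = diagm n (e # es)"
  proof (rule eq_matI)
    fix i j assume "i < dim_row (diagm n (e # es))" "j < dim_col (diagm n (e # es))"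
    hence ij: "i < n" "j < n" unfolding diagm_def by auto
    have e1: "(mat_adjoint U2 * A' * U2) $$ (i,j) = (\<Sum>c<Suc n1. \<Sum>r<Suc n1. cnj (U2$$(r,i)) * A'$$(r,c) * U2$$(c,j))"
      using triple_idx[OF U2c A'c U2c ij] n by simp
    from idx[OF ij(1)] idx[OF ij(2)] show "(mat_adjoint U2 * A' * U2) $$ (i,j) = diagm n (e # es) $$ (i,j)"
    proof (elim disjE exE conjE)
      assume "i = 0" "j = 0" thus ?thesis using e1[unfolded sum.lessThan_Suc_shift] ents ij by (simp del: sum.lessThan_Suc lessThan_Suc add: diagm_def)
    next
      fix j' assume "i = 0" "j = Suc j'" "j' < n1" thus ?thesis using e1[unfolded sum.lessThan_Suc_shift] ents ij by (simp del: sum.lessThan_Suc lessThan_Suc add: diagm_def)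
    next
      fix i' assume "i = Suc i'" "i' < n1" "j = 0" thus ?thesis using e1[unfolded sum.lessThan_Suc_shift] ents ij by (simp del: sum.lessThan_Suc lessThan_Suc add: diagm_def)
    next
      fix i' j' assume *: "i = Suc i'" "i' < n1" "j = Suc j'" "j' < n1"
      have "(mat_adjoint U2 * A' * U2) $$ (i,j) = (\<Sum>c<n1. \<Sum>r<n1. cnj (U3$$(r,i')) * A3$$(r,c) * U3$$(c,j'))"
        using e1[unfolded sum.lessThan_Suc_shift] ents * by (simp del: sum.lessThan_Suc lessThan_Suc)
      also have "\<dots> = (mat_adjoint U3 * A3 * U3) $$ (i',j')"
        using triple_idx[OF U3 _ U3 *(2,4), of A3] hA3 unfolding hermitian_mat_def by simp
      also have "\<dots> = diagm n (e # es) $$ (i,j)" using U3d * ij unfolding diagm_def by simp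
      finally show ?thesis .
    qed
  qed (use U2c in auto)
  moreover have "mat_adjoint (U1 * U2) * A * (U1 * U2) = mat_adjoint U2 * A' * U2"
    unfolding A'_def by (rule conj_mult[OF A U1 U2c])
  ultimately show ?case using unitary_mult[OF U1u U2u] by metis
qed




lemma smult_csp: "dim_vec x = dim_vec y \<Longrightarrow> (a \<cdot>\<^sub>v x) \<bullet>c (y::complex vec) = a * (x \<bullet>c y)"
  by (simp add: csp sum_distrib_left mult_ac)
lemma csp_smult_r: "dim_vec x = dim_vec y \<Longrightarrow> x \<bullet>c (b \<cdot>\<^sub>v (y::complex vec)) = cnj b * (x \<bullet>c y)"
  by (simp add: csp sum_distrib_left mult_ac)

lemma herm_eig: assumes h: "hermitian_mat n A" and r: "poly (char_poly A) e = 0"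
  shows "cnj e = e \<and> (psd_mat n A \<longrightarrow> 0 \<le> Re e)"
proof -
  have A: "A \<in> carrier_mat n n" and AA: "mat_adjoint A = A" using h unfolding hermitian_mat_def by auto
  have "eigenvalue A e" using eigenvalue_root_char_poly[OF A] r by simp
  then obtain v where v: "v \<in> carrier_vec n" "v \<noteq> 0\<^sub>v n" "A *\<^sub>v v = e \<cdot>\<^sub>v v"
    unfolding eigenvalue_def eigenvector_def using A by auto
  obtain r where rr: "v \<bullet>c v = complex_of_real r" "r > 0" using csp_self_real[OF v(1,2)] by blast
  have q1: "(A *\<^sub>v v) \<bullet>c v = e * complex_of_real r" using v rr by (simp add: smult_csp)
  have "(A *\<^sub>v v) \<bullet>c v = v \<bullet>c (A *\<^sub>v v)" using adj_vec[OF A v(1) v(1)] AA by simp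
  also have "\<dots> = cnj e * complex_of_real r" using v rr by (simp add: csp_smult_r)
  finally have "e * complex_of_real r = cnj e * complex_of_real r" using q1 by simp
  hence ce: "cnj e = e" using rr(2) by simp
  have "psd_mat n A \<Longrightarrow> 0 \<le> Re e"
  proof -
    assume "psd_mat n A"
    hence "0 \<le> Re ((A *\<^sub>v v) \<bullet>c v)" using v(1) unfolding psd_mat_def by blast
    hence "0 \<le> Re e * r" using q1 by simp
    thus "0 \<le> Re e" using rr(2) by (simp add: zero_le_mult_iff)
  qed
  thus ?thesis using ce by blast
qed

lemma poly_lin_root: "a \<in> set as \<Longrightarrow> poly (\<Prod>b\<leftarrow>as. [:- b, 1:]) a = (0::complex)"
  by (induction as) auto

lemma sum_list_singletons: "(\<Sum>a\<leftarrow>as. {#a#}) = mset as"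
  by (induction as) auto

lemma prod_list_mset_eq: "mset xs = mset ys \<Longrightarrow> (\<Prod>a\<leftarrow>xs. f a) = (\<Prod>a\<leftarrow>ys. (f a :: 'b :: comm_monoid_mult))"
  by (metis mset_map prod_mset_prod_list)

lemma eig_struct: assumes h: "hermitian_mat n A"
  shows "length (eigvals_desc A) = n \<and>
    char_poly A = (\<Prod>a\<leftarrow>map complex_of_real (eigvals_desc A). [:- a, 1:]) \<and>
    (psd_mat n A \<longrightarrow> (\<forall>t\<in>set (eigvals_desc A). 0 \<le> t))"
proof -
  have A: "A \<in> carrier_mat n n" using h unfolding hermitian_mat_def by auto
  obtain as where cp: "char_poly A = (\<Prod>a\<leftarrow>as. [:- a, 1:])" and len: "length as = n"
    using char_poly_factorized[OF A] by blast
  have "proots (char_poly A) = (\<Sum>p\<leftarrow>map (\<lambda>a. [:- a, 1:]) as. proots p)"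
  proof -
    have "0 \<notin> set (map (\<lambda>a. [:- a, 1::complex:]) as)" by auto
    from proots_prod_list[OF this] show ?thesis unfolding cp by simp
  qed
  also have "\<dots> = mset as" by (simp add: o_def sum_list_singletons)
  finally have pr: "proots (char_poly A) = mset as" .
  have real: "\<And>a. a \<in> set as \<Longrightarrow> complex_of_real (Re a) = a"
    using herm_eig[OF h] poly_lin_root cp by (metis Reals_cnj_iff complex_is_Real_iff of_real_Re)
  have ed: "eigvals_desc A = rev (sorted_list_of_multiset (image_mset Re (mset as)))"
    unfolding eigvals_desc_def pr ..
  have ms: "mset (eigvals_desc A) = image_mset Re (mset as)" unfolding ed by simp
  have "length (eigvals_desc A) = n" using arg_cong[OF ms, of size] len by simp
  moreover have "mset (map complex_of_real (eigvals_desc A)) = mset as"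
  proof -
    have "mset (map complex_of_real (eigvals_desc A)) = image_mset (\<lambda>a. complex_of_real (Re a)) (mset as)"
      using ms by (simp add: image_mset.compositionality o_def)
    also have "\<dots> = image_mset id (mset as)" using real by (intro image_mset_cong) simp
    finally show ?thesis by simp
  qed
  hence "char_poly A = (\<Prod>a\<leftarrow>map complex_of_real (eigvals_desc A). [:- a, 1:])"
    unfolding cp by (rule prod_list_mset_eq[symmetric])
  moreover have "psd_mat n A \<longrightarrow> (\<forall>t\<in>set (eigvals_desc A). 0 \<le> t)"
  proof (intro impI ballI)
    fix t assume p: "psd_mat n A" and t: "t \<in> set (eigvals_desc A)"
    have "t \<in># image_mset Re (mset as)" using t ms by (metis set_mset_mset)
    then obtain a where a: "a \<in> set as" "t = Re a" by auto
    show "0 \<le> t" using herm_eig[OF h] poly_lin_root[OF a(1)] cp p a(2) by metis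
  qed
  ultimately show ?thesis by blast
qed




lemma unit_equiv: assumes hA: "hermitian_mat n A" and hB: "hermitian_mat n B"
  and eq: "eigvals_desc A = eigvals_desc B"
  shows "\<exists>W. unitary_mat n W \<and> A = mat_adjoint W * B * W"
proof -
  have A: "A \<in> carrier_mat n n" using hA unfolding hermitian_mat_def by auto
  have B: "B \<in> carrier_mat n n" using hB unfolding hermitian_mat_def by auto
  define es where "es = map complex_of_real (eigvals_desc A)"
  obtain UA where UAu: "unitary_mat n UA" and UAd: "mat_adjoint UA * A * UA = diagm n es"
    using spectral[OF hA] eig_struct[OF hA] unfolding es_def by blast
  obtain UB where UBu: "unitary_mat n UB" and UBd: "mat_adjoint UB * B * UB = diagm n es"
    using spectral[OF hB] eig_struct[OF hB] eq unfolding es_def by metis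
  have UA: "UA \<in> carrier_mat n n" and UB: "UB \<in> carrier_mat n n" using UAu UBu unfolding unitary_mat_def by auto
  have UAr: "UA * mat_adjoint UA = 1\<^sub>m n" using unitary_right[OF UAu] .
  define W where "W = UB * mat_adjoint UA"
  have Wu: "unitary_mat n W" unfolding W_def by (rule unitary_mult[OF UBu unitary_adj[OF UAu]])
  have "mat_adjoint W * B * W = mat_adjoint (mat_adjoint UA) * (mat_adjoint UB * B * UB) * mat_adjoint UA"
    unfolding W_def by (rule conj_mult[OF B UB adj_carrier[OF UA]])
  also have "\<dots> = UA * (mat_adjoint UA * A * UA) * mat_adjoint UA" using UAd UBd by simp
  also have "\<dots> = (UA * mat_adjoint UA) * A * (UA * mat_adjoint UA)"
    using UA A by (simp add: assoc_mult_mat[of _ n n _ n _ n] mult_carrier_mat[of _ n n])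
  also have "\<dots> = A" using UAr A by simp
  finally show ?thesis using Wu by metis
qed

lemma contraction_mult: assumes V: "contraction_mat n V" and K: "unitary_mat n K"
  shows "contraction_mat n (V * K)"
proof -
  have Vc: "V \<in> carrier_mat n n" using V unfolding contraction_mat_def by auto
  have Kc: "K \<in> carrier_mat n n" using K unfolding unitary_mat_def by auto
  { fix x :: "complex vec" assume x: "x \<in> carrier_vec n"
    have Kx: "K *\<^sub>v x \<in> carrier_vec n" using Kc x by simp
    have "(V * K) *\<^sub>v x = V *\<^sub>v (K *\<^sub>v x)" using Vc Kc x by simp
    hence "Re (((V * K) *\<^sub>v x) \<bullet>c ((V * K) *\<^sub>v x)) \<le> Re ((K *\<^sub>v x) \<bullet>c (K *\<^sub>v x))"
      using V Kx unfolding contraction_mat_def by simp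
    also have "(K *\<^sub>v x) \<bullet>c (K *\<^sub>v x) = x \<bullet>c (mat_adjoint K *\<^sub>v (K *\<^sub>v x))"
      by (rule adj_vec[OF Kc x Kx])
    also have "mat_adjoint K *\<^sub>v (K *\<^sub>v x) = (mat_adjoint K * K) *\<^sub>v x"
      using Kc x by (simp add: assoc_mult_mat_vec[of _ n n _ n])
    also have "\<dots> = x" using K x unfolding unitary_mat_def by simp
    finally have "Re (((V * K) *\<^sub>v x) \<bullet>c ((V * K) *\<^sub>v x)) \<le> Re (x \<bullet>c x)" . }
  thus ?thesis unfolding contraction_mat_def using Vc Kc by auto
qed

theorem theorem3p6:
  fixes d m :: nat
  assumes "0 < d" and "0 < m"
  shows "(\<forall>S. hermitian_mat (d * m) S \<longrightarrow>
            (\<exists>D :: real list set. D \<subseteq> {x. length x = d} \<and>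
               partial_trace d m ` unitary_orbit (d * m) S =
                 {A. hermitian_mat d A \<and> eigvals_desc A \<in> D}))
       \<and> (\<forall>S. psd_mat (d * m) S \<longrightarrow>
            (\<exists>D :: real list set. D \<subseteq> {x. length x = d \<and> (\<forall>t \<in> set x. 0 \<le> t)} \<and>
               partial_trace d m ` contraction_orbit (d * m) S =
                 {A. psd_mat d A \<and> eigvals_desc A \<in> D}))"
proof (intro conjI allI impI)
  fix S assume hS: "hermitian_mat (d * m) S"
  have Sc: "S \<in> carrier_mat (d*m) (d*m)" using hS unfolding hermitian_mat_def by auto
  let ?X = "partial_trace d m ` unitary_orbit (d * m) S"
  have herm: "\<And>A. A \<in> ?X \<Longrightarrow> hermitian_mat d A"
  proof -
    fix A assume "A \<in> ?X"
    then obtain U where U: "unitary_mat (d*m) U" and A: "A = partial_trace d m (mat_adjoint U * S * U)"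
      unfolding unitary_orbit_def by auto
    have "hermitian_mat (d*m) (mat_adjoint U * S * U)"
      using herm_conj[OF hS] U unfolding unitary_mat_def by blast
    thus "hermitian_mat d A" unfolding A by (rule ptrace_herm)
  qed
  show "\<exists>D :: real list set. D \<subseteq> {x. length x = d} \<and> ?X = {A. hermitian_mat d A \<and> eigvals_desc A \<in> D}"
  proof (intro exI conjI)
    show "eigvals_desc ` ?X \<subseteq> {x. length x = d}" using herm eig_struct by blast
    show "?X = {A. hermitian_mat d A \<and> eigvals_desc A \<in> eigvals_desc ` ?X}"
    proof (intro equalityI subsetI)
      fix A assume "A \<in> ?X" thus "A \<in> {A. hermitian_mat d A \<and> eigvals_desc A \<in> eigvals_desc ` ?X}"
        using herm by blast
    next
      fix A assume "A \<in> {A. hermitian_mat d A \<and> eigvals_desc A \<in> eigvals_desc ` ?X}"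
      then obtain B where hA: "hermitian_mat d A" and B: "B \<in> ?X" and eq: "eigvals_desc A = eigvals_desc B" by auto
      obtain W where Wu: "unitary_mat d W" and AW: "A = mat_adjoint W * B * W"
        using unit_equiv[OF hA herm[OF B] eq] by blast
      obtain U where U: "unitary_mat (d*m) U" and BU: "B = partial_trace d m (mat_adjoint U * S * U)"
        using B unfolding unitary_orbit_def by auto
      have Uc: "U \<in> carrier_mat (d*m) (d*m)" using U unfolding unitary_mat_def by auto
      have Wc: "W \<in> carrier_mat d d" using Wu unfolding unitary_mat_def by auto
      let ?K = "bdiag d m W"
      have "A = partial_trace d m (mat_adjoint ?K * (mat_adjoint U * S * U) * ?K)"
        unfolding AW BU using ptrace_conj[OF Wc triple_carrier[OF Uc Sc]] by simp
      also have "\<dots> = partial_trace d m (mat_adjoint (U * ?K) * S * (U * ?K))"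
        using conj_mult[OF Sc Uc bdiag_carrier] by simp
      finally have "A = partial_trace d m (mat_adjoint (U * ?K) * S * (U * ?K))" .
      moreover have "unitary_mat (d*m) (U * ?K)" using unitary_mult[OF U unitary_bdiag[OF Wu]] .
      ultimately show "A \<in> ?X" unfolding unitary_orbit_def by blast
    qed
  qed
next
  fix S assume pS: "psd_mat (d * m) S"
  have Sc: "S \<in> carrier_mat (d*m) (d*m)" using pS unfolding psd_mat_def hermitian_mat_def by auto
  let ?X = "partial_trace d m ` contraction_orbit (d * m) S"
  have psd: "\<And>A. A \<in> ?X \<Longrightarrow> psd_mat d A"
  proof -
    fix A assume "A \<in> ?X"
    then obtain V where V: "contraction_mat (d*m) V" and A: "A = partial_trace d m (mat_adjoint V * S * V)"
      unfolding contraction_orbit_def by auto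
    have "psd_mat (d*m) (mat_adjoint V * S * V)"
      using psd_conj[OF pS] V unfolding contraction_mat_def by blast
    thus "psd_mat d A" unfolding A by (rule ptrace_psd)
  qed
  have herm: "\<And>A. A \<in> ?X \<Longrightarrow> hermitian_mat d A" using psd unfolding psd_mat_def by blast
  show "\<exists>D :: real list set. D \<subseteq> {x. length x = d \<and> (\<forall>t \<in> set x. 0 \<le> t)} \<and> ?X = {A. psd_mat d A \<and> eigvals_desc A \<in> D}"
  proof (intro exI conjI)
    show "eigvals_desc ` ?X \<subseteq> {x. length x = d \<and> (\<forall>t \<in> set x. 0 \<le> t)}" using herm psd eig_struct by blast
    show "?X = {A. psd_mat d A \<and> eigvals_desc A \<in> eigvals_desc ` ?X}"
    proof (intro equalityI subsetI)
      fix A assume "A \<in> ?X" thus "A \<in> {A. psd_mat d A \<and> eigvals_desc A \<in> eigvals_desc ` ?X}"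
        using psd by blast
    next
      fix A assume "A \<in> {A. psd_mat d A \<and> eigvals_desc A \<in> eigvals_desc ` ?X}"
      then obtain B where hA: "hermitian_mat d A" and B: "B \<in> ?X" and eq: "eigvals_desc A = eigvals_desc B"
        unfolding psd_mat_def by auto
      obtain W where Wu: "unitary_mat d W" and AW: "A = mat_adjoint W * B * W"
        using unit_equiv[OF hA herm[OF B] eq] by blast
      obtain V where V: "contraction_mat (d*m) V" and BV: "B = partial_trace d m (mat_adjoint V * S * V)"
        using B unfolding contraction_orbit_def by auto
      have Vc: "V \<in> carrier_mat (d*m) (d*m)" using V unfolding contraction_mat_def by auto
      have Wc: "W \<in> carrier_mat d d" using Wu unfolding unitary_mat_def by auto
      let ?K = "bdiag d m W"
      have "A = partial_trace d m (mat_adjoint ?K * (mat_adjoint V * S * V) * ?K)"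
        unfolding AW BV using ptrace_conj[OF Wc triple_carrier[OF Vc Sc]] by simp
      also have "\<dots> = partial_trace d m (mat_adjoint (V * ?K) * S * (V * ?K))"
        using conj_mult[OF Sc Vc bdiag_carrier] by simp
      finally have "A = partial_trace d m (mat_adjoint (V * ?K) * S * (V * ?K))" .
      moreover have "contraction_mat (d*m) (V * ?K)" using contraction_mult[OF V unitary_bdiag[OF Wu]] .
      ultimately show "A \<in> ?X" unfolding contraction_orbit_def by blast
    qed
  qed
qed


end
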